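(* Let $P$ be the symbol probability mass function of a stationary memoryless source over an alphabet of size $D\ge2$, with minimal mass $p_{\min}$. Let $\mathcal C$ be a Tunstall code with codewords of fixed length $m$ over an alphabet $\mathcal X$ ($|\mathcal X|\ge2$), corresponding to a Tunstall tree with $n$ leaves where $n\le|\mathcal X|^m<n+(D-1)$. For $\varepsilon>0$ let $d=d(m,\varepsilon):=\frac{m\varepsilon\ln|\mathcal X|}{1+\varepsilon}+\ln\big(1-\frac{D-1}{|\mathcal X|^m}\big)$ if $D>2$, and $d:=\frac{m\varepsilon\ln|\mathcal X|}{1+\varepsilon}$ if $D=2$, and suppose $d>0$. If $$p_{\min}\ge\frac{W_0(-e^{-d-1})}{W_{-1}(-e^{-d-1})},$$ then the compression rate $R$ of the Tunstall code satisfies $R\le(1+\varepsilon)H(P)$.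
   Context: $W_0$ and $W_{-1}$ are the principal and secondary real branches of the Lambert $W$ function ($W(u)e^{W(u)}=u$). A Tunstall tree with $n$ leaves is obtained from the root by repeatedly expanding a leaf of maximal probability into its $D$ children (a leaf reached by source symbols $s_1\cdots s_k$ has probability $\prod_jP(s_j)$); the Tunstall code parses the source sequence into the segments labelling the leaves and assigns to each leaf a distinct codeword of length $m$ over $\mathcal X$. The compression rate is $R:=\frac{m\log|\mathcal X|}{\mathbb E[\text{depth of the parsed leaf}]}$, the expected number of code letters (in the same logarithmic units as $H$) per source symbol, and $H(P)=-\sum_sP(s)\log P(s)$. *)

theory Defs
  imports Complex_Main
begin

text \<open>Real branches of the Lambert W function, for arguments in [-1/e, 0).\<close>
definition lambertW0 :: "real \<Rightarrow> real" where
  "lambertW0 u = (THE w. -1 \<le> w \<and> w * exp w = u)"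

definition lambertWm1 :: "real \<Rightarrow> real" where
  "lambertWm1 u = (THE w. w \<le> -1 \<and> w * exp w = u)"

definition word_prob :: "('a \<Rightarrow> real) \<Rightarrow> 'a list \<Rightarrow> real" where
  "word_prob P w = prod_list (map P w)"

text \<open>Tunstall trees, represented by their set of leaves (source strings).
  Starting from the root, repeatedly expand a leaf of maximal probability
  into its children (one per source symbol).\<close>
inductive tunstall_tree :: "'a set \<Rightarrow> ('a \<Rightarrow> real) \<Rightarrow> 'a list set \<Rightarrow> bool"
  for S :: "'a set" and P :: "'a \<Rightarrow> real" where
  root: "tunstall_tree S P {[]}"
| expand: "tunstall_tree S P T \<Longrightarrow> w \<in> T \<Longrightarrow> (\<forall>v\<in>T. word_prob P v \<le> word_prob P w)
           \<Longrightarrow> tunstall_tree S P ((T - {w}) \<union> (\<lambda>s. w @ [s]) ` S)"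

definition entropy :: "'a set \<Rightarrow> ('a \<Rightarrow> real) \<Rightarrow> real" where
  "entropy S P = - (\<Sum>s\<in>S. P s * ln (P s))"

definition expected_depth :: "('a \<Rightarrow> real) \<Rightarrow> 'a list set \<Rightarrow> real" where
  "expected_depth P T = (\<Sum>w\<in>T. word_prob P w * real (length w))"

definition compression_rate :: "nat \<Rightarrow> nat \<Rightarrow> ('a \<Rightarrow> real) \<Rightarrow> 'a list set \<Rightarrow> real" where
  "compression_rate m X_card P T = real m * ln (real X_card) / expected_depth P T"

end

theory Submission
  imports Defs "HOL-Analysis.Analysis"
begin


lemma lw_inc:
  fixes x y :: real assumes "-1 \<le> x" "x < y" shows "x * exp x < y * exp y"
proof (rule DERIV_pos_imp_increasing_open[OF assms(2)])
  fix z assume "x < z" "z < y"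
  then show "\<exists>r. DERIV (\<lambda>w. w * exp w) z :> r \<and> r > 0"
  proof (intro exI conjI)
    show "DERIV (\<lambda>w. w * exp w) z :> (1+z) * exp z"
      by (auto intro!: derivative_eq_intros simp: algebra_simps)
    show "(1+z) * exp z > 0" using assms \<open>x < z\<close> by (intro mult_pos_pos) auto
  qed
qed (intro continuous_intros)

lemma lw_dec:
  fixes x y :: real assumes "y \<le> -1" "x < y" shows "x * exp x > y * exp y"
proof (rule DERIV_neg_imp_decreasing_open[OF assms(2)])
  fix z assume "x < z" "z < y"
  then show "\<exists>r. DERIV (\<lambda>w. w * exp w) z :> r \<and> r < 0"
  proof (intro exI conjI)
    show "DERIV (\<lambda>w. w * exp w) z :> (1+z) * exp z"
      by (auto intro!: derivative_eq_intros simp: algebra_simps)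
    show "(1+z) * exp z < 0" using assms \<open>z < y\<close> by (intro mult_neg_pos) auto
  qed
qed (intro continuous_intros)

lemma lw0_ex:
  fixes u :: real assumes "- exp (-1) < u" "u < 0"
  shows "\<exists>w. -1 \<le> w \<and> w * exp w = u"
proof -
  have "\<exists>w. -1 \<le> w \<and> w \<le> 0 \<and> w * exp w = u"
    by (rule IVT') (use assms in \<open>auto intro!: continuous_intros\<close>)
  then show ?thesis by blast
qed

lemma lwm1_ex:
  fixes u :: real assumes "- exp (-1) < u" "u < 0"
  shows "\<exists>w. w \<le> -1 \<and> w * exp w = u"
proof -
  define x where "x = 4 / (-u) + 1"
  have xpos: "x > 1" using assms unfolding x_def by simp
  have "1 + x/2 \<le> exp (x/2)" by (rule exp_ge_add_one_self)
  hence "x/2 < exp (x/2)" by linarith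
  hence "(x/2)^2 < exp (x/2) ^2" using xpos by (intro power_strict_mono) auto
  also have "exp (x/2)^2 = exp x" by (simp add: power2_eq_square flip: exp_add)
  finally have "x^2/4 < exp x" by (simp add: power_divide)
  hence "x * (x/4) < exp x" by (simp add: power2_eq_square)
  hence "x * exp (-x) < 4 / x" using xpos by (simp add: exp_minus field_simps)
  also have "4 / x < -u" using assms xpos unfolding x_def by (simp add: field_simps mult_neg_neg)
  finally have h: "(-x) * exp (-x) \<ge> u" by simp
  have "\<exists>w. -x \<le> w \<and> w \<le> -1 \<and> w * exp w = u"
    by (rule IVT2') (use assms h xpos in \<open>auto intro!: continuous_intros\<close>)
  then show ?thesis by blast
qed

lemma lw0_props:
  fixes u :: real assumes "- exp (-1) < u" "u < 0"
  shows "-1 \<le> lambertW0 u \<and> lambertW0 u * exp (lambertW0 u) = u"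
  unfolding lambertW0_def
proof (rule theI')
  show "\<exists>!w. -1 \<le> w \<and> w * exp w = u"
  proof -
    obtain w where w: "-1 \<le> w \<and> w * exp w = u" using lw0_ex[OF assms] by blast
    have "v = w" if "-1 \<le> v \<and> v * exp v = u" for v
      using lw_inc[of v w] lw_inc[of w v] that w by (cases v w rule: linorder_cases) auto
    with w show ?thesis by blast
  qed
qed

lemma lwm1_props:
  fixes u :: real assumes "- exp (-1) < u" "u < 0"
  shows "lambertWm1 u \<le> -1 \<and> lambertWm1 u * exp (lambertWm1 u) = u"
  unfolding lambertWm1_def
proof (rule theI')
  show "\<exists>!w. w \<le> -1 \<and> w * exp w = u"
  proof -
    obtain w where w: "w \<le> -1 \<and> w * exp w = u" using lwm1_ex[OF assms] by blast
    have "v = w" if "v \<le> -1 \<and> v * exp v = u" for v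
      using lw_dec[of v w] lw_dec[of w v] that w by (cases v w rule: linorder_cases) auto
    with w show ?thesis by blast
  qed
qed


lemma word_prob_snoc: "word_prob P (w @ [s]) = word_prob P w * P s"
  by (simp add: word_prob_def)

lemma tree_props:
  assumes "tunstall_tree S P T" and Sfin: "finite S" and Sne: "S \<noteq> {}"
    and Ppos: "\<forall>s\<in>S. p \<le> P s \<and> P s \<le> 1" and p: "0 < p" and Psum: "(\<Sum>s\<in>S. P s) = 1"
  shows "finite T \<and> T \<noteq> {} \<and> (\<forall>v\<in>T. \<forall>w\<in>T. \<forall>u. v = w @ u \<longrightarrow> u = [])
    \<and> (\<Sum>w\<in>T. word_prob P w) = 1 \<and> (\<forall>v\<in>T. word_prob P v > 0)
    \<and> (\<forall>v\<in>T. \<forall>w\<in>T. word_prob P v \<ge> p * word_prob P w)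
    \<and> (\<Sum>w\<in>T. word_prob P w * ln (word_prob P w)) = expected_depth P T * (\<Sum>s\<in>S. P s * ln (P s))"
  using assms(1)
proof (induction rule: tunstall_tree.induct)
  case root
  have "p \<le> 1" using Ppos Sne by force
  then show ?case using p by (auto simp: word_prob_def expected_depth_def)
next
  case (expand T w)
  define Q where "Q = word_prob P"
  define Ch where "Ch = (\<lambda>s. w @ [s]) ` S"
  have IH: "finite T" "T \<noteq> {}" "\<forall>v\<in>T. \<forall>w\<in>T. \<forall>u. v = w @ u \<longrightarrow> u = []"
    "(\<Sum>w\<in>T. Q w) = 1" "\<forall>v\<in>T. Q v > 0" "\<forall>v\<in>T. \<forall>w\<in>T. Q v \<ge> p * Q w"
    "(\<Sum>w\<in>T. Q w * ln (Q w)) = expected_depth P T * (\<Sum>s\<in>S. P s * ln (P s))"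
    using expand.IH unfolding Q_def by auto
  have wT: "w \<in> T" and wmax: "\<forall>v\<in>T. Q v \<le> Q w" using expand.hyps unfolding Q_def by auto
  have Qsnoc: "Q (w @ [s]) = Q w * P s" for s unfolding Q_def by (rule word_prob_snoc)
  have injc: "inj_on (\<lambda>s. w @ [s]) S" by (auto simp: inj_on_def)
  have disj: "(T - {w}) \<inter> Ch = {}"
  proof -
    { fix s assume "w @ [s] \<in> T"
      with IH(3) wT have False by force }
    then show ?thesis unfolding Ch_def by auto
  qed
  have finCh: "finite Ch" unfolding Ch_def using Sfin by simp
  have finR: "finite (T - {w})" using IH(1) by simp
  have sumCh: "(\<Sum>v\<in>Ch. f v) = (\<Sum>s\<in>S. f (w @ [s]))" for f :: "'a list \<Rightarrow> real"
    unfolding Ch_def by (simp add: sum.reindex[OF injc])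
  have split: "(\<Sum>v\<in>(T - {w}) \<union> Ch. f v) = (\<Sum>v\<in>T. f v) - f w + (\<Sum>s\<in>S. f (w @ [s]))"
    for f :: "'a list \<Rightarrow> real"
    using sum.union_disjoint[OF finR finCh disj, of f] sum.remove[OF IH(1) wT, of f] sumCh[of f] by simp
  have Qw: "Q w > 0" using IH(5) wT by auto
  have Ps: "s \<in> S \<Longrightarrow> P s > 0" for s using Ppos p by force
  let ?T' = "(T - {w}) \<union> (\<lambda>s. w @ [s]) ` S"
  have fin': "finite ?T'" using finR finCh Ch_def by simp
  have ne': "?T' \<noteq> {}" using Sne by auto
  have pf': "\<forall>v\<in>?T'. \<forall>x\<in>?T'. \<forall>u. v = x @ u \<longrightarrow> u = []"
  proof (intro ballI allI impI)
    fix v x u assume v: "v \<in> ?T'" and x: "x \<in> ?T'" and e: "v = x @ u"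
    show "u = []"
    proof (cases "v \<in> T - {w}")
      case vT: True
      show ?thesis
      proof (cases "x \<in> T - {w}")
        case True then show ?thesis using IH(3) vT e by auto
      next
        case False
        then obtain s where "x = w @ [s]" using x by auto
        then have "v = w @ ([s] @ u)" using e by simp
        then have "[s] @ u = []" using IH(3) vT wT by blast
        then show ?thesis by simp
      qed
    next
      case False
      then obtain s where vs: "v = w @ [s]" using v by auto
      show ?thesis
      proof (cases "x \<in> T - {w}")
        case True
        then have "x \<in> T" "x \<noteq> w" by auto
        have "length x \<le> length v" using e by simp
        have "take (length x) v = x" using e by simp
        show ?thesis
        proof (cases "length x \<le> length w")
          case True
          then have "w = x @ drop (length x) w" using e vs
            by (metis append_eq_append_conv_if append_take_drop_id)
          then have "drop (length x) w = []" using IH(3) \<open>x \<in> T\<close> wT by blast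
          then have "w = x" using \<open>w = x @ drop (length x) w\<close> by simp
          then show ?thesis using \<open>x \<noteq> w\<close> by simp
        next
          case False
          then have "length x = length w + 1" using \<open>length x \<le> length v\<close> vs by simp
          then have "u = []" using e vs proof -
            have "length v = length x + length u" using e by simp
            moreover have "length v = length w + 1" using vs by simp
            ultimately show ?thesis using \<open>length x = length w + 1\<close> by simp
          qed
          then have "x = v" using e by simp
          then have "x = w @ [s]" using vs by simp
          then have "[s] = []" using IH(3) \<open>x \<in> T\<close> wT by blast
          then show ?thesis by simp
        qed
      next
        case False
        then obtain s' where "x = w @ [s']" using x by auto
        then show ?thesis using e vs by simp
      qed
    qed
  qed
  have sum': "(\<Sum>v\<in>?T'. Q v) = 1"
    using split[of Q] IH(4) Psum by (simp add: Ch_def Qsnoc flip: sum_distrib_left)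
  have pos': "\<forall>v\<in>?T'. Q v > 0" using IH(5) Qw Ps by (auto simp: Qsnoc)
  have ratio': "\<forall>v\<in>?T'. \<forall>x\<in>?T'. Q v \<ge> p * Q x"
  proof (intro ballI)
    fix v x assume v: "v \<in> ?T'" and x: "x \<in> ?T'"
    have up: "Q y \<le> Q w" if yT: "y \<in> ?T'" for y
    proof (cases "y \<in> T - {w}")
      case True then show ?thesis using wmax by auto
    next
      case False
      then obtain s where "y = w @ [s]" "s \<in> S" using yT by auto
      then show ?thesis using Ppos Qw by (simp add: Qsnoc mult_left_le)
    qed
    have lo: "Q y \<ge> p * Q w" if yT: "y \<in> ?T'" for y
    proof (cases "y \<in> T - {w}")
      case True then show ?thesis using IH(6) wT by auto
    next
      case False
      then obtain s where "y = w @ [s]" "s \<in> S" using yT by auto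
      then show ?thesis using Ppos Qw by (simp add: Qsnoc mult.commute mult_right_mono)
    qed
    have "p * Q x \<le> p * Q w" using up[OF x] p by simp
    then show "Q v \<ge> p * Q x" using lo[OF v] by linarith
  qed
  have ed': "expected_depth P ?T' = expected_depth P T + Q w"
  proof -
    have "expected_depth P ?T' = (\<Sum>v\<in>T. Q v * real (length v)) - Q w * real (length w)
       + (\<Sum>s\<in>S. Q w * P s * (1 + real (length w)))"
      unfolding expected_depth_def using split[of "\<lambda>v. Q v * real (length v)"]
      by (simp add: Q_def[symmetric] Ch_def Qsnoc)
    also have "(\<Sum>s\<in>S. Q w * P s * (1 + real (length w))) = Q w * (1 + real (length w))"
      using Psum by (simp add: sum_distrib_left[symmetric] sum_distrib_right[symmetric] mult.assoc
            mult.commute[of "P _"] flip: sum_distrib_right)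
    finally show ?thesis unfolding expected_depth_def Q_def by (simp add: algebra_simps)
  qed
  have ent': "(\<Sum>v\<in>?T'. Q v * ln (Q v)) = expected_depth P ?T' * (\<Sum>s\<in>S. P s * ln (P s))"
  proof -
    have e1: "(\<Sum>s\<in>S. Q (w @ [s]) * ln (Q (w @ [s]))) = Q w * ln (Q w) + Q w * (\<Sum>s\<in>S. P s * ln (P s))"
    proof -
      have "(\<Sum>s\<in>S. Q (w @ [s]) * ln (Q (w @ [s]))) = (\<Sum>s\<in>S. Q w * ln (Q w) * P s + Q w * (P s * ln (P s)))"
        by (rule sum.cong) (auto simp: Qsnoc ln_mult Qw Ps algebra_simps)
      also have "\<dots> = Q w * ln (Q w) * (\<Sum>s\<in>S. P s) + Q w * (\<Sum>s\<in>S. P s * ln (P s))"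
        by (simp add: sum.distrib sum_distrib_left)
      finally show ?thesis using Psum by simp
    qed
    show ?thesis using split[of "\<lambda>v. Q v * ln (Q v)"] e1 IH(7) ed' by (simp add: Ch_def algebra_simps)
  qed
  show ?case using fin' ne' pf' sum' pos' ratio' ent' unfolding Q_def by blast
qed


lemma chord:
  fixes a b u s :: real
  assumes a: "-1 \<le> a" "a * exp a = u" and b: "b \<le> -1" "b * exp b = u" and u: "u < 0"
    and ab: "a \<noteq> b" and s: "1 \<le> s" "s \<le> b / a"
  shows "s * ln s \<le> (-b) * (s - 1)"
proof -
  have "a * exp a < 0" using a u by simp
  hence a0: "a < 0" by (simp add: mult_less_0_iff)
  have ba: "b < a" using a b ab by linarith
  define \<rho> where "\<rho> = b / a"
  have rho1: "\<rho> > 1" unfolding \<rho>_def using a0 ba by (simp add: field_simps)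
  have "b / a = exp a / exp b" using a b a0 by (simp add: field_simps)
  also have "\<dots> = exp (a - b)" by (simp add: exp_diff)
  finally have lnr: "ln \<rho> = a - b" unfolding \<rho>_def by simp
  have cvx: "convex_on {1..\<rho>} (\<lambda>s. s * ln s)"
  proof (rule convex_on_realI[where f' = "\<lambda>s. ln s + 1"])
    show "connected {1..\<rho>}" by simp
    fix x assume "x \<in> {1..\<rho>}"
    then show "((\<lambda>s. s * ln s) has_real_derivative ln x + 1) (at x)"
      by (auto intro!: derivative_eq_intros)
  next
    fix x y :: real assume "x \<in> {1..\<rho>}" "y \<in> {1..\<rho>}" "x \<le> y"
    then show "ln x + 1 \<le> ln y + 1" by simp
  qed
  define l where "l = (s - 1) / (\<rho> - 1)"
  have l: "0 \<le> l" "l \<le> 1" using s rho1 unfolding l_def \<rho>_def by (auto simp: field_simps)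
  have "l * (\<rho> - 1) = s - 1" unfolding l_def using rho1 by simp
  hence seq: "s = (1 - l) *\<^sub>R 1 + l *\<^sub>R \<rho>" by (simp add: algebra_simps)
  have "s * ln s \<le> (1 - l) * (1 * ln 1) + l * (\<rho> * ln \<rho>)"
    using convex_onD[OF cvx l, of 1 \<rho>] rho1 seq by simp
  also have "\<dots> = (s - 1) * (\<rho> * (a - b) / (\<rho> - 1))" unfolding l_def lnr by simp
  also have "\<rho> * (a - b) / (\<rho> - 1) = -b" unfolding \<rho>_def using a0 ba by (simp add: field_simps)
  finally show ?thesis by (simp add: mult.commute)
qed

lemma core:
  fixes Q :: "'a \<Rightarrow> real"
  assumes fin: "finite T" and ne: "T \<noteq> {}" and pos: "\<forall>v\<in>T. Q v > 0" and sum1: "(\<Sum>v\<in>T. Q v) = 1"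
    and ratio: "\<forall>v\<in>T. \<forall>w\<in>T. Q v \<ge> t * Q w" and t: "0 < t"
    and k: "k > 0" and ch: "\<And>s. 1 \<le> s \<Longrightarrow> s \<le> 1 / t \<Longrightarrow> s * ln s \<le> k * (s - 1)"
  shows "(\<Sum>v\<in>T. Q v * ln (real (card T) * Q v)) \<le> k - 1 - ln k"
proof -
  define m0 where "m0 = Min (Q ` T)"
  define n where "n = real (card T)"
  have n: "n > 0" unfolding n_def using fin ne by (simp add: card_gt_0_iff)
  have "m0 \<in> Q ` T" unfolding m0_def using fin ne by (intro Min_in) auto
  then obtain w0 where w0: "w0 \<in> T" "m0 = Q w0" by blast
  have m0le: "m0 \<le> Q v" if "v \<in> T" for v unfolding m0_def using fin that by simp
  have m0: "m0 > 0" using pos w0 by auto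
  define L where "L = n * m0"
  have L: "L > 0" unfolding L_def using n m0 by simp
  have each: "Q v * ln (n * Q v) \<le> Q v * (ln L + k) - k * m0" if v: "v \<in> T" for v
  proof -
    define s where "s = Q v / m0"
    have s1: "1 \<le> s" unfolding s_def using m0le[OF v] m0 by simp
    have "t * Q v \<le> m0" using ratio w0 v by auto
    hence s2: "s \<le> 1 / t" unfolding s_def using m0 t by (simp add: field_simps)
    have Qv: "Q v = m0 * s" unfolding s_def using m0 by simp
    have sp: "s > 0" using s1 by simp
    have "Q v * ln (n * Q v) = Q v * ln L + m0 * (s * ln s)"
    proof -
      have "n * Q v = L * s" unfolding Qv L_def by simp
      hence "ln (n * Q v) = ln L + ln s" using L sp by (simp add: ln_mult)
      hence "Q v * ln (n * Q v) = Q v * ln L + Q v * ln s" by (simp add: distrib_left)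
      also have "Q v * ln s = m0 * (s * ln s)" unfolding Qv by simp
      finally show ?thesis .
    qed
    also have "\<dots> \<le> Q v * ln L + m0 * (k * (s - 1))"
      using ch[OF s1 s2] m0 by (intro add_left_mono mult_left_mono) auto
    also have "\<dots> = Q v * (ln L + k) - k * m0" unfolding Qv by (simp add: algebra_simps)
    finally show ?thesis .
  qed
  have "(\<Sum>v\<in>T. Q v * ln (n * Q v)) \<le> (\<Sum>v\<in>T. Q v * (ln L + k) - k * m0)"
    by (rule sum_mono) (use each in auto)
  also have "\<dots> = (ln L + k) - k * L"
  proof -
    have "(\<Sum>v\<in>T. Q v * (ln L + k) - k * m0) = (\<Sum>v\<in>T. Q v) * (ln L + k) - n * (k * m0)"
      unfolding n_def by (simp add: sum_subtractf sum_distrib_right)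
    also have "\<dots> = (ln L + k) - k * L" using sum1 unfolding L_def by simp
    finally show ?thesis .
  qed
  also have "\<dots> \<le> k - 1 - ln k"
  proof -
    have "ln (k * L) \<le> k * L - 1" using k L by (intro ln_le_minus_one) simp
    then show ?thesis using k L by (simp add: ln_mult)
  qed
  finally show ?thesis unfolding n_def .
qed

theorem theorem15:
  fixes S :: "'a set" and P :: "'a \<Rightarrow> real"
    and X :: "'b set" and m :: nat and T :: "'a list set"
    and C :: "'a list \<Rightarrow> 'b list" and \<epsilon> d :: real
  assumes S_fin: "finite S" and D_ge: "card S \<ge> 2"
    and P_nonneg: "\<forall>s\<in>S. P s \<ge> 0" and P_sum: "(\<Sum>s\<in>S. P s) = 1"
    and X_fin: "finite X" and X_ge: "card X \<ge> 2"
    and tree: "tunstall_tree S P T"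
    and n_le: "card T \<le> card X ^ m"
    and n_gt: "card X ^ m < card T + (card S - 1)"
    and code_inj: "inj_on C T"
    and code_words: "\<forall>w\<in>T. length (C w) = m \<and> set (C w) \<subseteq> X"
    and eps_pos: "\<epsilon> > 0"
    and d_arg_pos: "card S > 2 \<longrightarrow> 1 - (real (card S) - 1) / real (card X) ^ m > 0"
    and d_def: "d = (if card S > 2
                     then real m * \<epsilon> * ln (real (card X)) / (1 + \<epsilon>)
                          + ln (1 - (real (card S) - 1) / real (card X) ^ m)
                     else real m * \<epsilon> * ln (real (card X)) / (1 + \<epsilon>))"
    and d_pos: "d > 0"
    and pmin: "Min (P ` S) \<ge> lambertW0 (- exp (- d - 1)) / lambertWm1 (- exp (- d - 1))"
  shows "compression_rate m (card X) P T \<le> (1 + \<epsilon>) * entropy S P"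
proof -
  define u where "u = - exp (- d - 1)"
  have u1: "- exp (-1) < u" unfolding u_def using d_pos by simp
  have u0: "u < 0" unfolding u_def by simp
  define a where "a = lambertW0 u"
  define b where "b = lambertWm1 u"
  have a: "-1 \<le> a" "a * exp a = u" using lw0_props[OF u1 u0] unfolding a_def by auto
  have b: "b \<le> -1" "b * exp b = u" using lwm1_props[OF u1 u0] unfolding b_def by auto
  have ab: "a \<noteq> b"
  proof
    assume "a = b" then have "a = -1" using a b by simp
    then show False using a u1 by simp
  qed
  have "a * exp a < 0" using a u0 by simp
  hence a0: "a < 0" by (simp add: mult_less_0_iff)
  have ba: "b < a" using a b ab by linarith
  define t where "t = a / b"
  have t0: "t > 0" unfolding t_def using a0 ba by (simp add: divide_neg_neg)
  define pm where "pm = Min (P ` S)"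
  have pm_t: "pm \<ge> t" using pmin unfolding pm_def t_def a_def b_def u_def by simp
  have Sne: "S \<noteq> {}" using D_ge by auto
  have pm_le: "pm \<le> P s" if "s \<in> S" for s unfolding pm_def using S_fin that by simp
  have P_le1: "P s \<le> 1" if "s \<in> S" for s
    using member_le_sum[of s S P] P_nonneg S_fin that P_sum by auto
  have Ppos: "\<forall>s\<in>S. pm \<le> P s \<and> P s \<le> 1" using pm_le P_le1 by auto
  have pm0: "0 < pm" using pm_t t0 by simp
  note TP = tree_props[OF tree S_fin Sne Ppos pm0 P_sum]
  define Q where "Q = word_prob P"
  have Tfin: "finite T" and Tne: "T \<noteq> {}" and Qsum: "(\<Sum>v\<in>T. Q v) = 1"
    and Qpos: "\<forall>v\<in>T. Q v > 0" and Qrat: "\<forall>v\<in>T. \<forall>w\<in>T. Q v \<ge> pm * Q w"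
    and Qent: "(\<Sum>w\<in>T. Q w * ln (Q w)) = expected_depth P T * (\<Sum>s\<in>S. P s * ln (P s))"
    using TP unfolding Q_def by auto
  have Qrat_t: "\<forall>v\<in>T. \<forall>w\<in>T. Q v \<ge> t * Q w"
  proof (intro ballI)
    fix v w assume "v \<in> T" "w \<in> T"
    then have "t * Q w \<le> pm * Q w" using Qpos pm_t by (intro mult_right_mono) auto
    then show "Q v \<ge> t * Q w" using Qrat \<open>v \<in> T\<close> \<open>w \<in> T\<close> by fastforce
  qed
  define k where "k = - b"
  have k0: "k > 0" unfolding k_def using b by simp
  have ch: "s * ln s \<le> k * (s - 1)" if "1 \<le> s" "s \<le> 1 / t" for s
    using chord[OF a b u0 ab that(1)] that(2) unfolding k_def t_def by simp
  have core1: "(\<Sum>v\<in>T. Q v * ln (real (card T) * Q v)) \<le> k - 1 - ln k"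
    by (rule core[OF Tfin Tne Qpos Qsum Qrat_t t0 k0 ch])
  have dk: "d = k - 1 - ln k"
  proof -
    have "(-b) * exp b = exp (- d - 1)" using b unfolding u_def by simp
    hence e: "ln ((-b) * exp b) = - d - 1" by (metis ln_exp)
    have "ln ((-b) * exp b) = ln (-b) + b" using b ln_mult[of "-b" "exp b"] by simp
    hence "ln (-b) + b = - d - 1" using e by simp
    then show ?thesis unfolding k_def by simp
  qed
  define n where "n = real (card T)"
  have n0: "n > 0" unfolding n_def using Tfin Tne by (simp add: card_gt_0_iff)
  have "(\<Sum>v\<in>T. Q v * ln (n * Q v)) = (\<Sum>v\<in>T. Q v * ln n + Q v * ln (Q v))"
    by (rule sum.cong) (use Qpos n0 in \<open>auto simp: ln_mult distrib_left\<close>)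
  also have "\<dots> = ln n + (\<Sum>v\<in>T. Q v * ln (Q v))"
    using Qsum by (simp add: sum.distrib flip: sum_distrib_right)
  finally have HT: "- (\<Sum>v\<in>T. Q v * ln (Q v)) \<ge> ln n - d"
    using core1 dk unfolding n_def by linarith
  define N where "N = real (card X)"
  have N2: "N \<ge> 2" unfolding N_def using X_ge by simp
  define A where "A = real m * \<epsilon> * ln N / (1 + \<epsilon>)"
  have m1: "m \<ge> 1"
  proof (rule ccontr)
    assume "\<not> m \<ge> 1" then have "m = 0" by simp
    then show False using d_pos d_def d_arg_pos D_ge by (cases "card S > 2") auto
  qed
  have lnn: "ln n - d \<ge> real m * ln N - A"
  proof (cases "card S > 2")
    case True
    define c where "c = 1 - (real (card S) - 1) / N ^ m"
    have c0: "c > 0" using d_arg_pos True unfolding c_def N_def by simp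
    have dd: "d = A + ln c" using d_def True unfolding A_def c_def N_def by simp
    have Npos: "N ^ m > 0" using N2 by simp
    have "real (card X ^ m) < real (card T + (card S - 1))" using n_gt by linarith
    hence "N ^ m < n + real (card S) - 1" unfolding N_def n_def using D_ge by (simp add: of_nat_diff)
    moreover have "N ^ m * c = N ^ m - (real (card S) - 1)"
    proof -
      have "N ^ m * ((real (card S) - 1) / N ^ m) = real (card S) - 1" unfolding times_divide_eq_right using Npos N2 by (intro nonzero_mult_div_cancel_left) simp
      then show ?thesis unfolding c_def by (simp only: right_diff_distrib mult_1_right)
    qed
    ultimately have "N ^ m * c < n" by linarith
    hence "ln (N ^ m * c) \<le> ln n" using Npos c0 by (intro ln_mono) auto
    hence "ln (N ^ m) + ln c \<le> ln n" using Npos c0 N2 ln_mult[of "N ^ m" c] by simp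
    moreover have "ln (N ^ m) = real m * ln N" using N2 by (simp add: ln_realpow)
    ultimately show ?thesis using dd by linarith
  next
    case False
    have dd: "d = A" using d_def False unfolding A_def N_def by simp
    have "card T \<ge> card X ^ m" using n_gt False D_ge by simp
    hence "N ^ m \<le> n" unfolding N_def n_def by (metis of_nat_le_iff of_nat_power)
    hence "ln (N ^ m) \<le> ln n" using N2 by (intro ln_mono) auto
    moreover have "ln (N ^ m) = real m * ln N" using N2 by (simp add: ln_realpow)
    ultimately show ?thesis using dd by linarith
  qed
  have key: "real m * ln N - A = real m * ln N / (1 + \<epsilon>)"
    unfolding A_def using eps_pos by (simp add: field_simps)
  define ED where "ED = expected_depth P T"
  define H where "H = entropy S P"
  have HTe: "- (\<Sum>v\<in>T. Q v * ln (Q v)) = ED * H"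
    using Qent unfolding ED_def H_def entropy_def by simp
  have mlnpos: "real m * ln N > 0" using m1 N2 by simp
  have bound: "real m * ln N / (1 + \<epsilon>) \<le> ED * H" using HT lnn key HTe by linarith
  have H0: "H \<ge> 0"
  proof -
    have "P s * ln (P s) \<le> 0" if "s \<in> S" for s
      using Ppos pm0 that by (intro mult_nonneg_nonpos) (auto simp: ln_le_zero_iff)
    hence "(\<Sum>s\<in>S. P s * ln (P s)) \<le> 0" by (intro sum_nonpos) auto
    then show ?thesis unfolding H_def entropy_def by simp
  qed
  have pos1: "real m * ln N / (1 + \<epsilon>) > 0" using mlnpos eps_pos by simp
  have ED0: "ED > 0"
  proof (rule ccontr)
    assume "\<not> ED > 0"
    then have "ED * H \<le> 0" using H0 by (simp add: mult_nonpos_nonneg)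
    then show False using bound pos1 by linarith
  qed
  have "real m * ln N \<le> (1 + \<epsilon>) * (ED * H)" using bound eps_pos by (simp add: field_simps)
  hence "real m * ln N / ED \<le> (1 + \<epsilon>) * H" using ED0 by (simp add: field_simps)
  then show ?thesis unfolding compression_rate_def ED_def H_def N_def .
qed

end
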